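(* Let $X\subseteq\mathbb{R}^N$ be a closed convex set, $D\in\mathbb{R}^K$, $V$ a random $K\times N$ matrix, and $S(p):=\{x\in X:\mathbb{P}(Vx\le D)\ge p\}$. If $p\in(0,1]$ and $0\in S(p)$, then $S(p)$ is star-shaped with respect to the origin, i.e. $S(p)\ne\emptyset$ and $\{\lambda x:\lambda\in[0,1]\}\subseteq S(p)$ for every $x\in S(p)$.
   Context: The inequality $Vx\le D$ is componentwise. *)

theory Defs
  imports "HOL-Probability.Probability"
begin

definition chance_prob :: "'w measure \<Rightarrow> ('w \<Rightarrow> real^'n^'k) \<Rightarrow> real^'k \<Rightarrow> real^'n \<Rightarrow> real" where
  "chance_prob M V D x = measure M {\<omega> \<in> space M. \<forall>i. (V \<omega> *v x) $ i \<le> D $ i}"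

definition chance_set :: "'w measure \<Rightarrow> (real^'n) set \<Rightarrow> ('w \<Rightarrow> real^'n^'k) \<Rightarrow> real^'k \<Rightarrow> real \<Rightarrow> (real^'n) set" where
  "chance_set M X V D p = {x \<in> X. chance_prob M V D x \<ge> p}"

end

theory Submission
  imports Defs
begin

lemma meas_ev:
  fixes V :: "'w \<Rightarrow> real^'n^'k"
  assumes "V \<in> borel_measurable M"
  shows "{\<omega> \<in> space M. \<forall>i. (V \<omega> *v y) $ i \<le> D $ i} \<in> sets M"
proof -
  have c: "continuous_on UNIV (\<lambda>A::real^'n^'k. (A *v y) $ i)" for i
    unfolding matrix_vector_mult_def by (simp, intro continuous_intros)
  have "(\<lambda>\<omega>. (V \<omega> *v y) $ i) \<in> borel_measurable M" for i
    using measurable_compose[OF assms borel_measurable_continuous_onI[OF c]] by (simp add: o_def)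
  then show ?thesis by measurable
qed

theorem lemma2p14:
  fixes M :: "'w measure" and X :: "(real^'n) set" and V :: "'w \<Rightarrow> real^'n^'k"
    and D :: "real^'k" and p :: real
  assumes "prob_space M"
    and "V \<in> borel_measurable M"
    and "closed X" and "convex X"
    and "0 < p" and "p \<le> 1"
    and "0 \<in> chance_set M X V D p"
  shows "chance_set M X V D p \<noteq> {} \<and>
         (\<forall>x \<in> chance_set M X V D p. \<forall>t \<in> {0..1::real}. t *\<^sub>R x \<in> chance_set M X V D p)"
proof -
  interpret prob_space M by fact
  have X0: "0 \<in> X" and P0: "p \<le> chance_prob M V D 0"
    using assms(7) by (auto simp: chance_set_def)
  have Dnn: "0 \<le> D $ i" for i
  proof (rule ccontr)
    assume "\<not> 0 \<le> D $ i"
    then have e: "{\<omega> \<in> space M. \<forall>i. (V \<omega> *v 0) $ i \<le> D $ i} = {}" by auto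
    have "chance_prob M V D 0 = 0" unfolding chance_prob_def e by simp
    with P0 assms(5) show False by simp
  qed
  have main: "t *\<^sub>R x \<in> chance_set M X V D p"
    if x: "x \<in> chance_set M X V D p" and t: "t \<in> {0..1}" for x t
  proof -
    have xX: "x \<in> X" and px: "p \<le> chance_prob M V D x" using x by (auto simp: chance_set_def)
    have "(1 - t) *\<^sub>R 0 + t *\<^sub>R x \<in> X"
      using convexD[OF assms(4) X0 xX, of "1-t" t] t by auto
    then have tX: "t *\<^sub>R x \<in> X" by simp
    have sub: "{\<omega> \<in> space M. \<forall>i. (V \<omega> *v x) $ i \<le> D $ i}
        \<subseteq> {\<omega> \<in> space M. \<forall>i. (V \<omega> *v (t *\<^sub>R x)) $ i \<le> D $ i}"
    proof safe
      fix \<omega> i assume h: "\<forall>i. (V \<omega> *v x) $ i \<le> D $ i"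
      have "(V \<omega> *v (t *\<^sub>R x)) $ i = t * (V \<omega> *v x) $ i"
        by (simp add: matrix_vector_mult_scaleR)
      also have "\<dots> \<le> t * D $ i" using h t by (intro mult_left_mono) auto
      also have "\<dots> \<le> D $ i" using t Dnn[of i] by (simp add: mult_left_le_one_le)
      finally show "(V \<omega> *v (t *\<^sub>R x)) $ i \<le> D $ i" .
    qed
    have "chance_prob M V D x \<le> chance_prob M V D (t *\<^sub>R x)"
      unfolding chance_prob_def
      by (rule finite_measure_mono[OF sub meas_ev[OF assms(2)]])
    with px tX show ?thesis by (simp add: chance_set_def)
  qed
  show ?thesis using main assms(7) by blast
qed

end
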